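(* Consider robust dynamic pricing with feedback corrupted in at most $C$ rounds ($C$ known). The meta-algorithm described in the context, with the commitment subroutine \textsc{CommitKnown}, guarantees \[ \sum_{\ell\in\mathcal L}R(\ell)\le 2N_{\textsc{F}}+6C+3. \]
   Context: Robust dynamic pricing: there are $T$ rounds and an unknown valuation $v^\star\in[0,1)$. At each round $t$ the seller posts a price $p_t\in[0,1]$. The true sale indicator is $y_t=\mathbbm 1\{p_t\le v^\star\}$; the seller observes $\sigma_t\in\{0,1\}$, and at most $C$ rounds are corrupted: $|\{t\in[T]:\sigma_t\neq y_t\}|\le C$. Meta-algorithm: let $D=\lceil\log_2 T\rceil$. Consider the complete binary tree of intervals of depth $D$ with root $[0,1)$, where each non-leaf node $[L,R)$ has children $[L,M)$ and $[M,R)$, $M=(L+R)/2$; the depth-$D$ nodes are the leaves, forming the set $\mathcal L$ (each of length at most $1/T$), and $\ell^\star$ is the unique leaf containing $v^\star$. The algorithm keeps a current node $I$, initially the root, and repeats until the horizon ends: if $I=[L,R)$ is not a leaf, it performs a safety check — post $L$ and observe $\sigma_L$, post $R$ and observe $\sigma_R$; the check fails if $\sigma_L=0$ or $\sigma_R=1$ (by convention the query at $L=0$ and the query at $R=1$ always count as passing). On failure $I$ becomes its parent; otherwise it posts $M$, observes $\sigma_M$, and $I$ becomes $[M,R)$ if $\sigma_M=1$ and $[L,M)$ if $\sigma_M=0$. If $I$ is a leaf, the commitment subroutine is run on $I$; if it returns FAIL, $I$ becomes its parent. \textsc{CommitKnown}: each leaf $\ell$ has a counter $s_\ell$, initialized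 to $0$ at the start of the horizon and shared across all calls. On leaf $\ell=[L,R)$ it repeats: if $s_\ell\le C$, post $L$ and observe $\sigma_L$, post $R$ and observe $\sigma_R$; if $\sigma_L=0$ or $\sigma_R=1$, return FAIL, else increase $s_\ell$ by $1$. If $s_\ell>C$, post $L$ (and continue doing so). For a leaf $\ell$, $Q(\ell)$ is the set of rounds during which the commitment subroutine runs on $\ell$, and $R(\ell)=\sum_{t\in Q(\ell)}(v^\star-p_t\mathbbm 1\{p_t\le v^\star\})$. $N_{\textsc{F}}$ is the number of times the commitment subroutine returns FAIL on a leaf different from $\ell^\star$. *)

theory Defs
  imports Complex_Main
begin

text \<open>Tree nodes are pairs (depth d, index k) representing the dyadic interval
  [k/2^d, (k+1)/2^d).  The leaves are the nodes at depth D.\<close>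

definition depthD :: "nat \<Rightarrow> nat" where
  "depthD T = nat \<lceil>log 2 (real T)\<rceil>"

definition lo :: "nat \<Rightarrow> nat \<Rightarrow> real" where
  "lo d k = real k / 2 ^ d"

definition hi :: "nat \<Rightarrow> nat \<Rightarrow> real" where
  "hi d k = real (Suc k) / 2 ^ d"

definition mid :: "nat \<Rightarrow> nat \<Rightarrow> real" where
  "mid d k = (lo d k + hi d k) / 2"

text \<open>Algorithm state: current node (dep, idx), phase within the current
  check (0: about to post L, 1: about to post R, 2: about to post M),
  whether the L-query of the current check passed, and the shared leaf
  counters s_l (indexed by the leaf index).\<close>

datatype st = St (dep: nat) (idx: nat) (ph: nat) (pl: bool) (cnt: "nat \<Rightarrow> nat")

definition init_st :: st where
  "init_st = St 0 0 0 False (\<lambda>_. 0)"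

definition parent_st :: "st \<Rightarrow> st" where
  "parent_st s = St (dep s - 1) (idx s div 2) 0 False (cnt s)"

definition price :: "nat \<Rightarrow> nat \<Rightarrow> st \<Rightarrow> real" where
  "price D C s =
     (if dep s < D then
        (if ph s = 0 then lo (dep s) (idx s)
         else if ph s = 1 then hi (dep s) (idx s)
         else mid (dep s) (idx s))
      else
        (if cnt s (idx s) \<le> C \<and> ph s = 1 then hi (dep s) (idx s)
         else lo (dep s) (idx s)))"

definition passL :: "st \<Rightarrow> bool \<Rightarrow> bool" where
  "passL s \<sigma> \<longleftrightarrow> lo (dep s) (idx s) = 0 \<or> \<sigma>"

definition passR :: "st \<Rightarrow> bool \<Rightarrow> bool" where
  "passR s \<sigma> \<longleftrightarrow> hi (dep s) (idx s) = 1 \<or> \<not> \<sigma>"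

definition commit_fail :: "nat \<Rightarrow> nat \<Rightarrow> st \<Rightarrow> bool \<Rightarrow> bool" where
  "commit_fail D C s \<sigma> \<longleftrightarrow>
     dep s = D \<and> cnt s (idx s) \<le> C \<and> ph s = 1 \<and> \<not> (pl s \<and> passR s \<sigma>)"

definition step :: "nat \<Rightarrow> nat \<Rightarrow> st \<Rightarrow> bool \<Rightarrow> st" where
  "step D C s \<sigma> =
     (if dep s < D then
        (if ph s = 0 then St (dep s) (idx s) 1 (passL s \<sigma>) (cnt s)
         else if ph s = 1 then
           (if pl s \<and> passR s \<sigma> then St (dep s) (idx s) 2 (pl s) (cnt s)
            else parent_st s)
         else
           (if \<sigma> then St (Suc (dep s)) (2 * idx s + 1) 0 False (cnt s)
            else St (Suc (dep s)) (2 * idx s) 0 False (cnt s)))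
      else if cnt s (idx s) \<le> C then
        (if ph s = 0 then St (dep s) (idx s) 1 (passL s \<sigma>) (cnt s)
         else if pl s \<and> passR s \<sigma>
           then St (dep s) (idx s) 0 False ((cnt s)(idx s := Suc (cnt s (idx s))))
           else parent_st s)
      else s)"

text \<open>State at the beginning of round t (rounds 0,...,T-1), given the
  observed feedback sequence sigma.\<close>
primrec run :: "nat \<Rightarrow> nat \<Rightarrow> (nat \<Rightarrow> bool) \<Rightarrow> nat \<Rightarrow> st" where
  "run D C \<sigma> 0 = init_st"
| "run D C \<sigma> (Suc t) = step D C (run D C \<sigma> t) (\<sigma> t)"

definition posted :: "nat \<Rightarrow> nat \<Rightarrow> (nat \<Rightarrow> bool) \<Rightarrow> nat \<Rightarrow> real" where
  "posted D C \<sigma> t = price D C (run D C \<sigma> t)"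

definition corruptions :: "nat \<Rightarrow> nat \<Rightarrow> real \<Rightarrow> (nat \<Rightarrow> bool) \<Rightarrow> nat" where
  "corruptions T C v \<sigma> =
     card {t. t < T \<and> \<sigma> t \<noteq> (posted (depthD T) C \<sigma> t \<le> v)}"

definition star_leaf :: "nat \<Rightarrow> real \<Rightarrow> nat" where
  "star_leaf D v = nat \<lfloor>v * 2 ^ D\<rfloor>"

definition leaf_regret :: "nat \<Rightarrow> nat \<Rightarrow> real \<Rightarrow> (nat \<Rightarrow> bool) \<Rightarrow> nat \<Rightarrow> real" where
  "leaf_regret T C v \<sigma> k =
     (\<Sum>t\<in>{t. t < T \<and> dep (run (depthD T) C \<sigma> t) = depthD T
                   \<and> idx (run (depthD T) C \<sigma> t) = k}.
        v - (if posted (depthD T) C \<sigma> t \<le> v then posted (depthD T) C \<sigma> t else 0))"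

definition NF :: "nat \<Rightarrow> nat \<Rightarrow> real \<Rightarrow> (nat \<Rightarrow> bool) \<Rightarrow> nat" where
  "NF T C v \<sigma> =
     card {t. t < T \<and> commit_fail (depthD T) C (run (depthD T) C \<sigma> t) (\<sigma> t)
              \<and> idx (run (depthD T) C \<sigma> t) \<noteq> star_leaf (depthD T) v}"

end

theory Submission
  imports Defs
begin

lemma lo_ge0: "0 \<le> lo d k" by (simp add: lo_def)
lemma hi_ge0: "0 \<le> hi d k" by (simp add: hi_def)
lemma mid_ge0: "0 \<le> mid d k" by (simp add: mid_def lo_ge0 hi_ge0)
lemma hi_lo: "hi d k - lo d k = 1 / 2 ^ d" unfolding hi_def lo_def by (simp add: diff_divide_distrib[symmetric])

lemma star_iff:
  assumes "0 \<le> v"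
  shows "(k = star_leaf D v) \<longleftrightarrow> (lo D k \<le> v \<and> v < hi D k)"
proof -
  have p: "(0::real) < 2 ^ D" by simp
  have a: "lo D k \<le> v \<longleftrightarrow> real k \<le> v * 2 ^ D"
    unfolding lo_def using p by (simp add: divide_le_eq)
  have b: "v < hi D k \<longleftrightarrow> v * 2 ^ D < real k + 1"
    unfolding hi_def using p by (simp add: less_divide_eq add.commute)
  have x0: "0 \<le> v * 2 ^ D" using assms by simp
  have "(k = star_leaf D v) \<longleftrightarrow> \<lfloor>v * 2 ^ D\<rfloor> = int k"
    unfolding star_leaf_def using x0 by auto
  also have "\<dots> \<longleftrightarrow> real k \<le> v * 2 ^ D \<and> v * 2 ^ D < real k + 1"
    by (simp add: floor_eq_iff)
  finally show ?thesis using a b by simp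
qed

definition flag :: "nat \<Rightarrow> real \<Rightarrow> st \<Rightarrow> nat \<Rightarrow> nat" where
  "flag D v s k = (if dep s = D \<and> idx s = k \<and> ph s = 1 \<and> pl s \<and> v < lo D (idx s) then 1 else 0)"

definition good :: "nat \<Rightarrow> nat \<Rightarrow> real \<Rightarrow> st \<Rightarrow> nat \<Rightarrow> bool" where
  "good D C v s n \<longleftrightarrow> dep s \<le> D \<and> (dep s = D \<longrightarrow> ph s \<le> 1) \<and> (\<forall>k. cnt s k \<le> Suc C)
     \<and> (\<forall>k. k \<noteq> star_leaf D v \<longrightarrow> cnt s k + flag D v s k \<le> n)"

definition cb :: "nat \<Rightarrow> nat \<Rightarrow> real \<Rightarrow> st \<Rightarrow> bool \<Rightarrow> nat" where
  "cb D C v s b = (if b \<noteq> (price D C s \<le> v) then 1 else 0)"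

lemma nonstar_hi:
  assumes "0 \<le> v" "k \<noteq> star_leaf D v" "lo D k \<le> v" shows "hi D k \<le> v"
  using star_iff[OF assms(1), of k D] assms by auto

lemma good_step:
  assumes v0: "0 \<le> v" and v1: "v < 1" and g: "good D C v s n"
  shows "good D C v (step D C s b) (n + cb D C v s b)"
proof (cases "dep s < D")
  case True
  then show ?thesis using g
    by (auto simp: good_def step_def flag_def parent_st_def)
next
  case False
  with g have dD: "dep s = D" and ph1: "ph s \<le> 1" by (auto simp: good_def)
  show ?thesis
  proof (cases "cnt s (idx s) \<le> C")
    case False
    then show ?thesis using g dD by (auto simp: good_def step_def)
  next
    case cC: True
    show ?thesis
    proof (cases "ph s = 0")
      case True
      have "passL s b \<and> v < lo D (idx s) \<Longrightarrow> cb D C v s b = 1"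
        using v0 dD True by (auto simp: passL_def cb_def price_def)
      then show ?thesis using g dD cC True
        by (auto simp: good_def step_def flag_def split: if_splits)
    next
      case p1: False
      with ph1 have p1: "ph s = 1" by simp
      show ?thesis
      proof (cases "pl s \<and> passR s b")
        case False
        then show ?thesis using g dD cC p1
          by (auto simp: good_def step_def flag_def parent_st_def)
      next
        case True
        have key: "idx s \<noteq> star_leaf D v \<Longrightarrow> cnt s (idx s) + 1 \<le> n + cb D C v s b"
        proof -
          assume ns: "idx s \<noteq> star_leaf D v"
          have c1: "cnt s (idx s) + flag D v s (idx s) \<le> n" using g ns by (auto simp: good_def)
          show ?thesis
          proof (cases "v < lo D (idx s)")
            case True
            then have "flag D v s (idx s) = 1" using dD p1 \<open>pl s \<and> passR s b\<close> by (simp add: flag_def)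
            then show ?thesis using c1 by simp
          next
            case False
            then have "hi D (idx s) \<le> v" using nonstar_hi[OF v0 ns] by simp
            moreover then have "hi D (idx s) \<noteq> 1" using v1 by auto
            ultimately have "cb D C v s b = 1" using True dD p1 cC
              by (auto simp: passR_def cb_def price_def)
            then show ?thesis using c1 by simp
          qed
        qed
        show ?thesis using g dD cC p1 True key
          by (auto simp: good_def step_def flag_def)
      qed
    qed
  qed
qed

definition rg :: "real \<Rightarrow> real \<Rightarrow> real" where
  "rg v p = v - (if p \<le> v then p else 0)"

definition Phi :: "nat \<Rightarrow> real \<Rightarrow> st \<Rightarrow> real" where
  "Phi D v s = (if dep s = D \<and> ph s = 1 then
     (if pl s \<noteq> (lo D (idx s) \<le> v) then -2 else if idx s = star_leaf D v then 0 else 1) else 0)"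

lemma price_ge0: "0 \<le> price D C s"
  by (simp add: price_def lo_ge0 hi_ge0 mid_ge0)

lemma rg_le: "0 \<le> p \<Longrightarrow> rg v p \<le> v" by (simp add: rg_def)
lemma rg_ge: "0 \<le> v \<Longrightarrow> 0 \<le> rg v p" by (simp add: rg_def)

lemma rg_star: assumes "0 \<le> v" shows "rg v (lo D (star_leaf D v)) \<le> 1 / 2 ^ D"
proof -
  have "lo D (star_leaf D v) \<le> v \<and> v < hi D (star_leaf D v)" using star_iff[OF assms] by blast
  then show ?thesis using hi_lo[of D "star_leaf D v"] by (simp add: rg_def)
qed

lemma Phi_le: "Phi D v s \<le> 1" by (simp add: Phi_def)

lemma step_B:
  assumes v0: "0 \<le> v" and v1: "v < 1" and g: "good D C v s n" and nc: "n + cb D C v s b \<le> C"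
  shows "(if dep s = D then rg v (price D C s) else 0) + Phi D v s
     \<le> 2 * real (if commit_fail D C s b \<and> idx s \<noteq> star_leaf D v then 1 else 0)
       + 3 * real (cb D C v s b)
       + (real (cnt (step D C s b) (star_leaf D v)) - real (cnt s (star_leaf D v)))
       + 1 / 2 ^ D + Phi D v (step D C s b)"
proof -
  let ?st = "star_leaf D v"
  have e0: "(0::real) \<le> 1 / 2 ^ D" by simp
  have rgle: "rg v (price D C s) \<le> v" by (rule rg_le[OF price_ge0])
  show ?thesis
  proof (cases "dep s < D")
    case True
    then show ?thesis using e0
      by (auto simp: step_def Phi_def parent_st_def commit_fail_def)
  next
    case False
    with g have dD: "dep s = D" and ph1: "ph s \<le> 1" by (auto simp: good_def)
    show ?thesis
    proof (cases "cnt s (idx s) \<le> C")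
      case False
      have "idx s = ?st"
      proof (rule ccontr)
        assume "idx s \<noteq> ?st"
        then have "cnt s (idx s) \<le> n" using g by (auto simp: good_def)
        then show False using False nc by simp
      qed
      moreover have "price D C s = lo D (idx s)" using False dD by (simp add: price_def)
      ultimately have "rg v (price D C s) \<le> 1 / 2 ^ D" using rg_star[OF v0] by simp
      moreover have "step D C s b = s" using False dD by (simp add: step_def)
      ultimately show ?thesis using dD False by (simp add: commit_fail_def)
    next
      case cC: True
      show ?thesis
      proof (cases "ph s = 0")
        case p0: True
        have pr: "price D C s = lo D (idx s)" using dD p0 by (simp add: price_def)
        have st: "step D C s b = St D (idx s) 1 (passL s b) (cnt s)" using dD cC p0 by (simp add: step_def)
        have ncf: "\<not> commit_fail D C s b" using p0 by (simp add: commit_fail_def)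
        have P0: "Phi D v s = 0" using p0 by (simp add: Phi_def)
        show ?thesis
        proof (cases "passL s b \<noteq> (lo D (idx s) \<le> v)")
          case True
          then have "cb D C v s b = 1" using pr v0 dD by (auto simp: passL_def cb_def)
          moreover have "Phi D v (step D C s b) = -2" using st True by (simp add: Phi_def)
          ultimately show ?thesis using st P0 ncf dD rgle v1 e0 by (simp; use e0 in linarith)
        next
          case False
          show ?thesis
          proof (cases "idx s = ?st")
            case True
            have "rg v (price D C s) \<le> 1 / 2 ^ D" using pr True rg_star[OF v0] by simp
            moreover have "Phi D v (step D C s b) = 0" using st True False by (simp add: Phi_def)
            ultimately show ?thesis using st P0 ncf dD by simp
          next
            case ns: False
            have "Phi D v (step D C s b) = 1" using st ns False by (simp add: Phi_def)
            then show ?thesis using st P0 ncf dD rgle v1 e0 by (simp; use e0 in linarith)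
          qed
        qed
      next
        case False
        with ph1 have p1: "ph s = 1" by simp
        have pr: "price D C s = hi D (idx s)" using dD p1 cC by (simp add: price_def)
        show ?thesis
        proof (cases "pl s \<and> passR s b")
          case ok: True
          have st: "step D C s b = St D (idx s) 0 False ((cnt s)(idx s := Suc (cnt s (idx s))))"
            using dD cC p1 ok by (simp add: step_def)
          have P1: "Phi D v (step D C s b) = 0" using st by (simp add: Phi_def)
          have ncf: "\<not> commit_fail D C s b" using ok by (simp add: commit_fail_def)
          show ?thesis
          proof (cases "idx s = ?st")
            case True
            have "Phi D v s \<le> 0" using True by (simp add: Phi_def)
            then show ?thesis using st P1 ncf dD rgle v1 e0 True by (simp; use e0 in linarith)
          next
            case ns: False
            show ?thesis
            proof (cases "v < lo D (idx s)")
              case True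
              then have "Phi D v s = -2" using ok dD p1 by (simp add: Phi_def)
              then show ?thesis using st P1 ncf dD rgle v1 e0 ns
                by (simp; use e0 in linarith)
            next
              case False
              then have "hi D (idx s) \<le> v" using nonstar_hi[OF v0 ns] by simp
              moreover then have "hi D (idx s) \<noteq> 1" using v1 by auto
              ultimately have "cb D C v s b = 1" using ok pr dD
                by (auto simp: passR_def cb_def)
              then show ?thesis using st P1 ncf dD rgle v1 e0 ns Phi_le[of D v s] by (simp; use e0 in linarith)
            qed
          qed
        next
          case bad: False
          have st: "step D C s b = parent_st s"
            using dD cC p1 bad by (auto simp: step_def)
          have P1: "Phi D v (step D C s b) = 0" using st by (simp add: Phi_def parent_st_def)
          have cf: "commit_fail D C s b" using bad dD cC p1 by (simp add: commit_fail_def)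
          have cnteq: "cnt (step D C s b) = cnt s" using st by (simp add: parent_st_def)
          show ?thesis
          proof (cases "idx s = ?st")
            case ns: False
            then show ?thesis using P1 cf cnteq dD rgle v1 e0 Phi_le[of D v s] by (simp; use e0 in linarith)
          next
            case True
            have lv: "lo D (idx s) \<le> v" and vh: "v < hi D (idx s)"
              using True star_iff[OF v0] by auto
            show ?thesis
            proof (cases "pl s")
              case False
              then have "Phi D v s = -2" using lv dD p1 by (simp add: Phi_def)
              then show ?thesis using P1 cf cnteq dD rgle v1 e0 by (simp; use e0 in linarith)
            next
              case True
              then have "\<not> passR s b" using bad by simp
              then have "cb D C v s b = 1" using pr vh dD by (auto simp: passR_def cb_def)
              then show ?thesis using P1 cf cnteq dD rgle v1 e0 Phi_le[of D v s] by (simp; use e0 in linarith)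
            qed
          qed
        qed
      qed
    qed
  qed
qed

lemma card_Suc_filter:
  "card {t. t < Suc n \<and> P t} = card {t. t < n \<and> P t} + (if P n then 1 else 0)"
proof -
  have fin: "finite {t. t < n \<and> P t}" by simp
  show ?thesis
  proof (cases "P n")
    case True
    then have "{t. t < Suc n \<and> P t} = insert n {t. t < n \<and> P t}" by auto
    then show ?thesis using True fin by simp
  next
    case False
    then have "{t. t < Suc n \<and> P t} = {t. t < n \<and> P t}" using less_Suc_eq by auto
    then show ?thesis using False by simp
  qed
qed

definition CorN :: "nat \<Rightarrow> nat \<Rightarrow> real \<Rightarrow> (nat \<Rightarrow> bool) \<Rightarrow> nat \<Rightarrow> nat" where
  "CorN D C v \<sigma> n = card {t. t < n \<and> \<sigma> t \<noteq> (posted D C \<sigma> t \<le> v)}"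

definition NFn :: "nat \<Rightarrow> nat \<Rightarrow> real \<Rightarrow> (nat \<Rightarrow> bool) \<Rightarrow> nat \<Rightarrow> nat" where
  "NFn D C v \<sigma> n = card {t. t < n \<and> commit_fail D C (run D C \<sigma> t) (\<sigma> t)
              \<and> idx (run D C \<sigma> t) \<noteq> star_leaf D v}"

definition Regn :: "nat \<Rightarrow> nat \<Rightarrow> real \<Rightarrow> (nat \<Rightarrow> bool) \<Rightarrow> nat \<Rightarrow> real" where
  "Regn D C v \<sigma> n = (\<Sum>t<n. if dep (run D C \<sigma> t) = D then rg v (price D C (run D C \<sigma> t)) else 0)"

lemma CorN_Suc: "CorN D C v \<sigma> (Suc n) = CorN D C v \<sigma> n + cb D C v (run D C \<sigma> n) (\<sigma> n)"
  unfolding CorN_def cb_def posted_def by (subst card_Suc_filter) simp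

lemma NFn_Suc: "NFn D C v \<sigma> (Suc n) = NFn D C v \<sigma> n +
   (if commit_fail D C (run D C \<sigma> n) (\<sigma> n) \<and> idx (run D C \<sigma> n) \<noteq> star_leaf D v then 1 else 0)"
  unfolding NFn_def by (subst card_Suc_filter) simp

lemma good_run:
  assumes "0 \<le> v" "v < 1"
  shows "good D C v (run D C \<sigma> n) (CorN D C v \<sigma> n)"
proof (induction n)
  case 0
  show ?case by (simp add: good_def init_st_def flag_def CorN_def)
next
  case (Suc n)
  show ?case using good_step[OF assms Suc.IH, of "\<sigma> n"] by (simp add: CorN_Suc)
qed

lemma main_inv:
  assumes v0: "0 \<le> v" and v1: "v < 1"
  shows "CorN D C v \<sigma> n \<le> C \<Longrightarrow> Regn D C v \<sigma> n \<le> 2 * real (NFn D C v \<sigma> n) + 3 * real (CorN D C v \<sigma> n)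
     + real (cnt (run D C \<sigma> n) (star_leaf D v)) + real n / 2 ^ D + Phi D v (run D C \<sigma> n)"
proof (induction n)
  case 0
  show ?case by (simp add: Regn_def NFn_def CorN_def init_st_def Phi_def)
next
  case (Suc n)
  have c: "CorN D C v \<sigma> n + cb D C v (run D C \<sigma> n) (\<sigma> n) \<le> C" using Suc.prems by (simp add: CorN_Suc)
  then have IH: "Regn D C v \<sigma> n \<le> 2 * real (NFn D C v \<sigma> n) + 3 * real (CorN D C v \<sigma> n)
     + real (cnt (run D C \<sigma> n) (star_leaf D v)) + real n / 2 ^ D + Phi D v (run D C \<sigma> n)"
    using Suc.IH by simp
  note B = step_B[OF v0 v1 good_run[OF v0 v1, of D C \<sigma> n] c]
  have R: "Regn D C v \<sigma> (Suc n) = Regn D C v \<sigma> n +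
     (if dep (run D C \<sigma> n) = D then rg v (price D C (run D C \<sigma> n)) else 0)"
    by (simp add: Regn_def)
  have e: "real (Suc n) / 2 ^ D = real n / 2 ^ D + 1 / 2 ^ D" by (simp add: add_divide_distrib)
  show ?case using IH B R e by (simp add: NFn_Suc CorN_Suc)
qed

lemma pow_depth: assumes "1 \<le> T" shows "real T \<le> 2 ^ depthD T"
proof -
  have "real T = 2 powr (log 2 (real T))" using assms by simp
  also have "\<dots> \<le> 2 powr (real (depthD T))"
  proof (rule powr_mono)
    show "log 2 (real T) \<le> real (depthD T)" unfolding depthD_def
      by (rule real_nat_ceiling_ge)
  qed simp
  also have "\<dots> = 2 ^ depthD T" by (simp add: powr_realpow)
  finally show ?thesis .
qed

theorem lemma4p2:
  fixes T C :: nat and v :: real and \<sigma> :: "nat \<Rightarrow> bool"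
  assumes "1 \<le> T"
    and "0 \<le> v" and "v < 1"
    and "corruptions T C v \<sigma> \<le> C"
  shows "(\<Sum>k<2 ^ depthD T. leaf_regret T C v \<sigma> k)
           \<le> 2 * real (NF T C v \<sigma>) + 6 * real C + 3"
proof -
  define D where "D = depthD T"
  define r where "r = run D C \<sigma>"
  define g where "g = (\<lambda>t. rg v (price D C (r t)))"
  have g0: "\<And>t. 0 \<le> g t" unfolding g_def using rg_ge[OF assms(2)] by simp
  have lr: "leaf_regret T C v \<sigma> k = (\<Sum>t<T. if dep (r t) = D \<and> idx (r t) = k then g t else 0)" for k
  proof -
    have se: "{t. t < T \<and> dep (r t) = D \<and> idx (r t) = k} = {t\<in>{..<T}. dep (r t) = D \<and> idx (r t) = k}"
      by auto
    show ?thesis unfolding leaf_regret_def D_def[symmetric] r_def[symmetric] g_def rg_def posted_def se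
      by (rule sum.inter_filter) simp
  qed
  have "(\<Sum>k<2 ^ D. leaf_regret T C v \<sigma> k)
      = (\<Sum>t<T. \<Sum>k<2 ^ D. if dep (r t) = D \<and> idx (r t) = k then g t else 0)"
    unfolding lr by (rule sum.swap)
  also have "\<dots> \<le> (\<Sum>t<T. if dep (r t) = D then g t else 0)"
  proof (rule sum_mono)
    fix t
    show "(\<Sum>k<2 ^ D. if dep (r t) = D \<and> idx (r t) = k then g t else 0) \<le> (if dep (r t) = D then g t else 0)"
      using g0[of t] by (cases "dep (r t) = D") (simp_all add: sum.delta)
  qed
  also have "\<dots> = Regn D C v \<sigma> T" unfolding Regn_def r_def g_def by simp
  also have "\<dots> \<le> 2 * real (NFn D C v \<sigma> T) + 3 * real (CorN D C v \<sigma> T)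
     + real (cnt (run D C \<sigma> T) (star_leaf D v)) + real T / 2 ^ D + Phi D v (run D C \<sigma> T)"
    using main_inv[OF assms(2,3)] assms(4) unfolding corruptions_def CorN_def D_def by blast
  also have "\<dots> \<le> 2 * real (NF T C v \<sigma>) + 3 * real C + real (Suc C) + 1 + 1"
  proof -
    have "NFn D C v \<sigma> T = NF T C v \<sigma>" unfolding NFn_def NF_def D_def by simp
    moreover have "CorN D C v \<sigma> T \<le> C" using assms(4) unfolding corruptions_def CorN_def D_def by simp
    moreover have "cnt (run D C \<sigma> T) (star_leaf D v) \<le> Suc C"
      using good_run[OF assms(2,3), of D C \<sigma> T] by (simp add: good_def)
    moreover have "real T / 2 ^ D \<le> 1" using pow_depth[OF assms(1)] unfolding D_def by simp
    moreover have "Phi D v (run D C \<sigma> T) \<le> 1" by (rule Phi_le)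
    ultimately show ?thesis by linarith
  qed
  also have "\<dots> \<le> 2 * real (NF T C v \<sigma>) + 6 * real C + 3" by simp
  finally show ?thesis unfolding D_def .
qed

end
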